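(* Let $(A;R)\in\mathcal C$. Then a subset $Y\subseteq A$ is a basis of the pregeometry $PG(A;R)$ if and only if $A\setminus Y$ is the image of a transversal of $R$.
   Context: A set system is a pair $(A;R)$ where $A$ is a set and $R$ is a set of finite non-empty subsets of $A$. For finite $X\subseteq A$ write $R[X]=\{r\in R: r\subseteq X\}$ and define the predimension $\delta(X)=|X|-|R[X]|$. $\mathcal C$ is the class of finite set systems with $\delta(X)\ge 0$ for all $X\subseteq A$. For $X\subseteq A$ define $d(X)=\min\{\delta(Y): X\subseteq Y\subseteq A\}$ and $\mathrm{cl}(X)=\{y\in A: d(X\cup\{y\})=d(X)\}$; then $(A,\mathrm{cl})$ is a pregeometry (matroid) with rank function $d$, denoted $PG(A;R)$. A transversal of $(A;R)$ is an injective function $t:R\to A$ with $t(r)\in r$ for all $r\in R$. *)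

theory Defs
  imports Main
begin

definition set_system :: "'a set \<Rightarrow> 'a set set \<Rightarrow> bool" where
  "set_system A R \<longleftrightarrow> (\<forall>r\<in>R. r \<subseteq> A \<and> finite r \<and> r \<noteq> {})"

definition Rsub :: "'a set set \<Rightarrow> 'a set \<Rightarrow> 'a set set" where
  "Rsub R X = {r \<in> R. r \<subseteq> X}"

definition delta :: "'a set set \<Rightarrow> 'a set \<Rightarrow> int" where
  "delta R X = int (card X) - int (card (Rsub R X))"

definition in_C :: "'a set \<Rightarrow> 'a set set \<Rightarrow> bool" where
  "in_C A R \<longleftrightarrow> finite A \<and> set_system A R \<and> (\<forall>X. X \<subseteq> A \<longrightarrow> delta R X \<ge> 0)"

definition dim :: "'a set \<Rightarrow> 'a set set \<Rightarrow> 'a set \<Rightarrow> int" where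
  "dim A R X = Min {delta R Y | Y. X \<subseteq> Y \<and> Y \<subseteq> A}"

definition cl :: "'a set \<Rightarrow> 'a set set \<Rightarrow> 'a set \<Rightarrow> 'a set" where
  "cl A R X = {y \<in> A. dim A R (X \<union> {y}) = dim A R X}"

definition pg_indep :: "'a set \<Rightarrow> 'a set set \<Rightarrow> 'a set \<Rightarrow> bool" where
  "pg_indep A R Y \<longleftrightarrow> Y \<subseteq> A \<and> (\<forall>y\<in>Y. y \<notin> cl A R (Y - {y}))"

definition pg_basis :: "'a set \<Rightarrow> 'a set set \<Rightarrow> 'a set \<Rightarrow> bool" where
  "pg_basis A R Y \<longleftrightarrow> pg_indep A R Y \<and> cl A R Y = A"

definition transversal :: "'a set \<Rightarrow> 'a set set \<Rightarrow> ('a set \<Rightarrow> 'a) \<Rightarrow> bool" where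
  "transversal A R t \<longleftrightarrow> inj_on t R \<and> (\<forall>r\<in>R. t r \<in> r \<and> t r \<in> A)"

end

theory Submission
  imports Defs
begin

lemma hall_aux:
  "finite I \<Longrightarrow> (\<forall>i\<in>I. finite (S i)) \<Longrightarrow> (\<forall>J\<subseteq>I. card J \<le> card (\<Union>(S ` J)))
   \<Longrightarrow> (\<Sum>i\<in>I. card (S i)) = n \<Longrightarrow> \<exists>f. inj_on f I \<and> (\<forall>i\<in>I. f i \<in> S i)"
proof (induction n arbitrary: S rule: less_induct)
  case (less n S)
  note fin = less.prems(1) and finS = less.prems(2) and H = less.prems(3)
  show ?case
  proof (cases "\<exists>i\<in>I. 2 \<le> card (S i)")
    case False
    have one: "\<forall>i\<in>I. card (S i) = 1"
    proof
      fix i assume "i \<in> I"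
      then have "card {i} \<le> card (\<Union>(S ` {i}))" using H by auto
      then show "card (S i) = 1" using False \<open>i \<in> I\<close> by auto
    qed
    define f where "f i = the_elem (S i)" for i
    have Sf: "\<forall>i\<in>I. S i = {f i}"
      using one unfolding f_def by (auto simp: card_1_singleton_iff)
    have "inj_on f I"
    proof (rule inj_onI, rule ccontr)
      fix i j assume ij: "i \<in> I" "j \<in> I" "f i = f j" "i \<noteq> j"
      then have "{i,j} \<subseteq> I" by auto
      then have "card {i,j} \<le> card (\<Union>(S ` {i,j}))" using H by blast
      also have "\<Union>(S ` {i,j}) = {f i}" using Sf ij by auto
      finally show False using ij by auto
    qed
    then show ?thesis using Sf by auto
  next
    case True
    then obtain i where i: "i \<in> I" "2 \<le> card (S i)" by auto
    then have "S i \<noteq> {}" by auto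
    then obtain x1 where x1: "x1 \<in> S i" by auto
    have "card (S i - {x1}) \<ge> 1" using i x1 finS by auto
    then have "S i - {x1} \<noteq> {}" by (metis card.empty not_one_le_zero)
    then obtain x2 where x2: "x2 \<in> S i" "x2 \<noteq> x1" by auto
    define S1 where "S1 = S(i := S i - {x1})"
    define S2 where "S2 = S(i := S i - {x2})"
    have key: "(\<forall>J\<subseteq>I. card J \<le> card (\<Union>(S1 ` J))) \<or> (\<forall>J\<subseteq>I. card J \<le> card (\<Union>(S2 ` J)))"
    proof (rule ccontr)
      assume "\<not> ?thesis"
      then obtain J1 J2 where J1: "J1 \<subseteq> I" "card (\<Union>(S1 ` J1)) < card J1"
        and J2: "J2 \<subseteq> I" "card (\<Union>(S2 ` J2)) < card J2" by (auto simp: not_le)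
      have iJ1: "i \<in> J1"
      proof (rule ccontr)
        assume "i \<notin> J1"
        then have "S1 ` J1 = S ` J1" unfolding S1_def by (auto simp: image_def)
        then show False using H J1 by (metis not_le)
      qed
      have iJ2: "i \<in> J2"
      proof (rule ccontr)
        assume "i \<notin> J2"
        then have "S2 ` J2 = S ` J2" unfolding S2_def by (auto simp: image_def)
        then show False using H J2 by (metis not_le)
      qed
      define K1 where "K1 = J1 - {i}"
      define K2 where "K2 = J2 - {i}"
      have finK1: "finite K1" "finite K2" using J1 J2 fin finite_subset unfolding K1_def K2_def by blast+
      define U1 where "U1 = \<Union>(S ` K1) \<union> (S i - {x1})"
      define U2 where "U2 = \<Union>(S ` K2) \<union> (S i - {x2})"
      have U1eq: "\<Union>(S1 ` J1) = U1" unfolding U1_def S1_def K1_def using iJ1 by auto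
      have U2eq: "\<Union>(S2 ` J2) = U2" unfolding U2_def S2_def K2_def using iJ2 by auto
      have cJ1: "card J1 = card K1 + 1" unfolding K1_def using iJ1 finK1
        by (metis K1_def One_nat_def add.commute card.insert insert_Diff plus_1_eq_Suc Diff_iff singletonI)
      have cJ2: "card J2 = card K2 + 1" unfolding K2_def using iJ2 finK1
        by (metis K2_def One_nat_def add.commute card.insert insert_Diff plus_1_eq_Suc Diff_iff singletonI)
      have KI: "K1 \<subseteq> I" "K2 \<subseteq> I" using J1 J2 unfolding K1_def K2_def by auto
      have finU: "finite U1" "finite U2" unfolding U1_def U2_def using finK1 KI finS i by auto
      have c1: "card U1 \<le> card K1" using J1 U1eq cJ1 by simp
      have c2: "card U2 \<le> card K2" using J2 U2eq cJ2 by simp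
      have "U1 \<union> U2 = \<Union>(S ` insert i (K1 \<union> K2))" unfolding U1_def U2_def using x2 by auto
      moreover have "card (insert i (K1 \<union> K2)) \<le> card (\<Union>(S ` insert i (K1 \<union> K2)))"
        using H KI i by (meson insert_subset le_sup_iff)
      moreover have "card (insert i (K1 \<union> K2)) = card (K1 \<union> K2) + 1"
        using finK1 unfolding K1_def K2_def by simp
      ultimately have a: "card (K1 \<union> K2) + 1 \<le> card (U1 \<union> U2)" by simp
      have "card (K1 \<inter> K2) \<le> card (\<Union>(S ` (K1 \<inter> K2)))" using H KI by (meson inf.coboundedI1)
      also have "\<dots> \<le> card (U1 \<inter> U2)"
        by (rule card_mono) (use finU in \<open>auto simp: U1_def U2_def\<close>)
      finally have b: "card (K1 \<inter> K2) \<le> card (U1 \<inter> U2)" .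
      have "card (K1 \<union> K2) + card (K1 \<inter> K2) = card K1 + card K2"
        using card_Un_Int finK1 by metis
      moreover have "card (U1 \<union> U2) + card (U1 \<inter> U2) = card U1 + card U2"
        using card_Un_Int finU by metis
      ultimately show False using a b c1 c2 by linarith
    qed
    have less1: "(\<Sum>j\<in>I. card (S1 j)) < n"
      unfolding less.prems(4)[symmetric]
    proof (rule sum_strict_mono_ex1[OF fin])
      show "\<forall>x\<in>I. card (S1 x) \<le> card (S x)" unfolding S1_def
        using finS by (auto intro: card_mono)
      show "\<exists>a\<in>I. card (S1 a) < card (S a)" unfolding S1_def
        using i x1 finS by (intro bexI[of _ i]) (auto intro: psubset_card_mono)
    qed
    have less2: "(\<Sum>j\<in>I. card (S2 j)) < n"
      unfolding less.prems(4)[symmetric]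
    proof (rule sum_strict_mono_ex1[OF fin])
      show "\<forall>x\<in>I. card (S2 x) \<le> card (S x)" unfolding S2_def
        using finS by (auto intro: card_mono)
      show "\<exists>a\<in>I. card (S2 a) < card (S a)" unfolding S2_def
        using i x2 finS by (intro bexI[of _ i]) (auto intro: psubset_card_mono)
    qed
    have f1: "\<forall>j\<in>I. finite (S1 j)" "\<forall>j\<in>I. finite (S2 j)"
      using finS unfolding S1_def S2_def by auto
    from key show ?thesis
    proof
      assume "\<forall>J\<subseteq>I. card J \<le> card (\<Union>(S1 ` J))"
      from less.IH[OF less1 fin f1(1) this refl] obtain f where
        "inj_on f I" "\<forall>j\<in>I. f j \<in> S1 j" by blast
      then show ?thesis unfolding S1_def by (metis Diff_iff fun_upd_apply)
    next
      assume "\<forall>J\<subseteq>I. card J \<le> card (\<Union>(S2 ` J))"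
      from less.IH[OF less2 fin f1(2) this refl] obtain f where
        "inj_on f I" "\<forall>j\<in>I. f j \<in> S2 j" by blast
      then show ?thesis unfolding S2_def by (metis Diff_iff fun_upd_apply)
    qed
  qed
qed

lemma hall:
  "finite I \<Longrightarrow> (\<forall>i\<in>I. finite (S i)) \<Longrightarrow> (\<forall>J\<subseteq>I. card J \<le> card (\<Union>(S ` J)))
   \<Longrightarrow> \<exists>f. inj_on f I \<and> (\<forall>i\<in>I. f i \<in> S i)"
  using hall_aux by blast


lemma fin_set: "finite A \<Longrightarrow> finite {delta R Y | Y. X \<subseteq> Y \<and> Y \<subseteq> A}"
proof -
  assume "finite A"
  have "{delta R Y | Y. X \<subseteq> Y \<and> Y \<subseteq> A} \<subseteq> delta R ` Pow A" by auto
  moreover have "finite (delta R ` Pow A)" using \<open>finite A\<close> by simp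
  ultimately show ?thesis by (rule finite_subset)
qed

lemma dim_le: "finite A \<Longrightarrow> X \<subseteq> Y \<Longrightarrow> Y \<subseteq> A \<Longrightarrow> dim A R X \<le> delta R Y"
  unfolding dim_def by (rule Min_le[OF fin_set]) auto

lemma dim_attained: "finite A \<Longrightarrow> X \<subseteq> A \<Longrightarrow> \<exists>Y. X \<subseteq> Y \<and> Y \<subseteq> A \<and> dim A R X = delta R Y"
proof -
  assume a: "finite A" "X \<subseteq> A"
  have "dim A R X \<in> {delta R Y | Y. X \<subseteq> Y \<and> Y \<subseteq> A}"
    unfolding dim_def by (rule Min_in[OF fin_set[OF a(1)]]) (use a in auto)
  then show ?thesis by auto
qed

lemma dim_mono: "finite A \<Longrightarrow> X \<subseteq> X' \<Longrightarrow> X' \<subseteq> A \<Longrightarrow> dim A R X \<le> dim A R X'"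
proof -
  assume a: "finite A" "X \<subseteq> X'" "X' \<subseteq> A"
  obtain Y where Y: "X' \<subseteq> Y" "Y \<subseteq> A" "dim A R X' = delta R Y" using dim_attained[OF a(1) a(3)] by blast
  have "dim A R X \<le> delta R Y" using a Y by (intro dim_le) auto
  then show ?thesis using Y by simp
qed

lemma delta_submod:
  assumes "finite A" "finite R" "X \<subseteq> A" "Z \<subseteq> A"
  shows "delta R (X \<union> Z) + delta R (X \<inter> Z) \<le> delta R X + delta R Z"
proof -
  have fX: "finite X" "finite Z" using assms finite_subset by auto
  have fR: "finite (Rsub R X)" "finite (Rsub R Z)" "finite (Rsub R (X \<union> Z))"
    using assms(2) unfolding Rsub_def by auto
  have e: "Rsub R (X \<inter> Z) = Rsub R X \<inter> Rsub R Z" by (auto simp: Rsub_def)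
  have "Rsub R X \<union> Rsub R Z \<subseteq> Rsub R (X \<union> Z)" by (auto simp: Rsub_def)
  then have m: "card (Rsub R X \<union> Rsub R Z) \<le> card (Rsub R (X \<union> Z))"
    using fR by (intro card_mono) auto
  have c1: "card (X \<union> Z) + card (X \<inter> Z) = card X + card Z" using card_Un_Int fX by metis
  have c2: "card (Rsub R X \<union> Rsub R Z) + card (Rsub R X \<inter> Rsub R Z) = card (Rsub R X) + card (Rsub R Z)"
    using card_Un_Int fR by metis
  show ?thesis unfolding delta_def e using c1 c2 m by linarith
qed

lemma dim_submod:
  assumes "finite A" "finite R" "X \<subseteq> A" "Z \<subseteq> A"
  shows "dim A R (X \<union> Z) + dim A R (X \<inter> Z) \<le> dim A R X + dim A R Z"
proof -
  obtain Y1 where Y1: "X \<subseteq> Y1" "Y1 \<subseteq> A" "dim A R X = delta R Y1" using dim_attained assms by metis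
  obtain Y2 where Y2: "Z \<subseteq> Y2" "Y2 \<subseteq> A" "dim A R Z = delta R Y2" using dim_attained assms by metis
  have "dim A R (X \<union> Z) \<le> delta R (Y1 \<union> Y2)" using Y1 Y2 assms(1) by (intro dim_le) auto
  moreover have "dim A R (X \<inter> Z) \<le> delta R (Y1 \<inter> Y2)" using Y1 Y2 assms(1) by (intro dim_le) auto
  moreover have "delta R (Y1 \<union> Y2) + delta R (Y1 \<inter> Y2) \<le> delta R Y1 + delta R Y2"
    using delta_submod assms Y1 Y2 by blast
  ultimately show ?thesis using Y1 Y2 by linarith
qed

lemma delta_le_card: "delta R X \<le> int (card X)"
  unfolding delta_def by simp

theorem theorem2p2:
  fixes A :: "'a set" and R :: "'a set set" and Y :: "'a set"
  assumes "in_C A R" and "Y \<subseteq> A"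
  shows "pg_basis A R Y \<longleftrightarrow> (\<exists>t. transversal A R t \<and> A - Y = t ` R)"
proof -
  have finA: "finite A" and ss: "set_system A R" and nonneg: "\<forall>X. X \<subseteq> A \<longrightarrow> delta R X \<ge> 0"
    using assms(1) unfolding in_C_def by auto
  have RA: "R \<subseteq> Pow A" using ss unfolding set_system_def by auto
  have finR: "finite R" using RA finA by (meson finite_Pow_iff finite_subset)
  have finY: "finite Y" using assms(2) finA finite_subset by auto
  have dimA: "dim A R A = delta R A" using dim_le[OF finA, of A A R] dim_attained[OF finA, of A R] by auto
  have RsubA: "Rsub R A = R" using RA unfolding Rsub_def by auto
  have cardAY: "card (A - Y) = card A - card Y" using finY assms(2) card_Diff_subset by blast
  have cYA: "card Y \<le> card A" using finA assms(2) card_mono by blast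
  show ?thesis
  proof
    assume B: "pg_basis A R Y"
    have ind: "\<forall>y\<in>Y. dim A R Y \<noteq> dim A R (Y - {y})"
    proof
      fix y assume y: "y \<in> Y"
      then have "y \<notin> cl A R (Y - {y})" using B unfolding pg_basis_def pg_indep_def by auto
      moreover have "Y - {y} \<union> {y} = Y" using y by auto
      moreover have "y \<in> A" using y assms(2) by blast
      ultimately have "dim A R (Y - {y} \<union> {y}) \<noteq> dim A R (Y - {y})" by (simp add: cl_def)
      then show "dim A R Y \<noteq> dim A R (Y - {y})" using \<open>Y - {y} \<union> {y} = Y\<close> by simp
    qed
    have step: "\<forall>y\<in>Y. dim A R (Y - {y}) + 1 \<le> dim A R Y"
    proof
      fix y assume y: "y \<in> Y"
      have "dim A R (Y - {y}) \<le> dim A R Y" using assms(2) by (intro dim_mono[OF finA]) auto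
      moreover have "dim A R Y \<noteq> dim A R (Y - {y})" using ind y by blast
      ultimately show "dim A R (Y - {y}) + 1 \<le> dim A R Y" by arith
    qed
    have lowZ: "finite Z \<Longrightarrow> Z \<subseteq> Y \<Longrightarrow> int (card Z) \<le> dim A R Z" for Z
    proof (induction Z rule: finite_induct)
      case empty
      have "dim A R {} = 0"
      proof -
        obtain W where W: "W \<subseteq> A" "dim A R {} = delta R W" using dim_attained[OF finA, of "{}" R] by auto
        have "dim A R {} \<le> delta R {}" using dim_le[OF finA] by auto
        moreover have "delta R {} = 0" unfolding delta_def Rsub_def using ss unfolding set_system_def by auto
        moreover have "delta R W \<ge> 0" using nonneg W(1) by blast
        ultimately show ?thesis using W by linarith
      qed
      then show ?case by simp
    next
      case (insert y Z)
      have yY: "y \<in> Y" "Z \<subseteq> Y" using insert by auto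
      have sub: "dim A R (insert y Z \<union> (Y - {y})) + dim A R (insert y Z \<inter> (Y - {y}))
          \<le> dim A R (insert y Z) + dim A R (Y - {y})"
      proof -
        have "insert y Z \<subseteq> A" "Y - {y} \<subseteq> A" using yY assms(2) by auto
        then show ?thesis by (rule dim_submod[OF finA finR])
      qed
      have e1: "insert y Z \<union> (Y - {y}) = Y" using yY by auto
      have e2: "insert y Z \<inter> (Y - {y}) = Z" using yY insert by auto
      have "int (card (insert y Z)) = int (card Z) + 1" using insert by simp
      moreover have "int (card Z) \<le> dim A R Z" using insert yY by blast
      moreover have "dim A R (Y - {y}) + 1 \<le> dim A R Y" using step yY by blast
      ultimately show ?case using sub unfolding e1 e2 by linarith
    qed
    have dY: "int (card Y) \<le> dim A R Y" using lowZ finY by simp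
    have dY2: "dim A R Y \<le> int (card Y)"
    proof -
      have "dim A R Y \<le> delta R Y" by (rule dim_le[OF finA order_refl assms(2)])
      then show ?thesis using delta_le_card[of R Y] by linarith
    qed
    have span: "\<forall>a\<in>A. dim A R (Y \<union> {a}) = dim A R Y"
    proof
      fix a assume "a \<in> A"
      then have "a \<in> cl A R Y" using B by (simp add: pg_basis_def)
      then show "dim A R (Y \<union> {a}) = dim A R Y" by (simp add: cl_def)
    qed
    have spanZ: "finite Z \<Longrightarrow> Z \<subseteq> A \<Longrightarrow> dim A R (Y \<union> Z) = dim A R Y" for Z
    proof (induction Z rule: finite_induct)
      case empty then show ?case by simp
    next
      case (insert a Z)
      have aA: "a \<in> A" "Z \<subseteq> A" using insert by auto
      have sub: "dim A R ((Y \<union> Z) \<union> (Y \<union> {a})) + dim A R ((Y \<union> Z) \<inter> (Y \<union> {a}))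
          \<le> dim A R (Y \<union> Z) + dim A R (Y \<union> {a})"
        using aA assms(2) by (intro dim_submod[OF finA finR]) auto
      have m: "dim A R Y \<le> dim A R ((Y \<union> Z) \<inter> (Y \<union> {a}))"
        using aA assms(2) by (intro dim_mono[OF finA]) auto
      have m2: "dim A R Y \<le> dim A R (Y \<union> insert a Z)"
        using aA assms(2) by (intro dim_mono[OF finA]) auto
      have e: "(Y \<union> Z) \<union> (Y \<union> {a}) = Y \<union> insert a Z" by auto
      have i1: "dim A R (Y \<union> Z) = dim A R Y" using insert aA by blast
      have i2: "dim A R (Y \<union> {a}) = dim A R Y" using span aA by blast
      show ?case using sub m m2 i1 i2 unfolding e by linarith
    qed
    have dYA: "dim A R Y = dim A R A" using spanZ[of A] finA assms(2) by (simp add: Un_absorb1)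
    have cR: "int (card R) = int (card A) - int (card Y)"
      using dYA dimA dY dY2 RsubA unfolding delta_def by simp
    have cond: "Y \<subseteq> Z \<Longrightarrow> Z \<subseteq> A \<Longrightarrow> card (Rsub R Z) \<le> card (Z - Y)" for Z
    proof -
      assume z: "Y \<subseteq> Z" "Z \<subseteq> A"
      have "int (card Y) \<le> delta R Z" using dY dim_le[OF finA z, of R] by linarith
      moreover have "card (Z - Y) = card Z - card Y" using z finY card_Diff_subset by blast
      moreover have "card Y \<le> card Z" using z finA card_mono finite_subset by blast
      ultimately show ?thesis unfolding delta_def by linarith
    qed
    have H: "\<forall>J\<subseteq>R. card J \<le> card (\<Union>((\<lambda>r. r - Y) ` J))"
    proof (intro allI impI)
      fix J assume J: "J \<subseteq> R"
      define Z where "Z = Y \<union> \<Union>J"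
      have z: "Y \<subseteq> Z" "Z \<subseteq> A" unfolding Z_def using assms(2) J RA by auto
      have "J \<subseteq> Rsub R Z" unfolding Rsub_def Z_def using J by auto
      then have "card J \<le> card (Rsub R Z)" using finR by (intro card_mono) (auto simp: Rsub_def)
      also have "\<dots> \<le> card (Z - Y)" using cond z by blast
      also have "Z - Y = \<Union>((\<lambda>r. r - Y) ` J)" unfolding Z_def by auto
      finally show "card J \<le> card (\<Union>((\<lambda>r. r - Y) ` J))" .
    qed
    have fS: "\<forall>r\<in>R. finite (r - Y)" using ss unfolding set_system_def by auto
    obtain t where t: "inj_on t R" "\<forall>r\<in>R. t r \<in> r - Y" using hall[OF finR fS H] by blast
    have sub: "t ` R \<subseteq> A - Y" using t RA by auto
    have "card (t ` R) = card (A - Y)" using card_image[OF t(1)] cR cardAY cYA by simp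
    then have "t ` R = A - Y" using sub finA by (intro card_subset_eq) auto
    moreover have "transversal A R t" unfolding transversal_def using t RA by auto
    ultimately show "\<exists>t. transversal A R t \<and> A - Y = t ` R" by auto
  next
    assume "\<exists>t. transversal A R t \<and> A - Y = t ` R"
    then obtain t where t: "inj_on t R" "\<forall>r\<in>R. t r \<in> r" "A - Y = t ` R"
      unfolding transversal_def by auto
    have cR: "card R = card A - card Y" using card_image[OF t(1)] t(3) cardAY by simp
    have cond: "Y \<subseteq> Z \<Longrightarrow> Z \<subseteq> A \<Longrightarrow> int (card Y) \<le> delta R Z" for Z
    proof -
      assume z: "Y \<subseteq> Z" "Z \<subseteq> A"
      have "t ` Rsub R Z \<subseteq> Z - Y" using t z unfolding Rsub_def by blast
      moreover have "card (t ` Rsub R Z) = card (Rsub R Z)"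
        using t(1) by (intro card_image) (auto simp: Rsub_def intro: inj_on_subset)
      ultimately have "card (Rsub R Z) \<le> card (Z - Y)"
        using z finA by (metis card_mono finite_Diff finite_subset)
      moreover have "card (Z - Y) = card Z - card Y" using z finY card_Diff_subset by blast
      moreover have "card Y \<le> card Z" using z finA card_mono finite_subset by blast
      ultimately show ?thesis unfolding delta_def by linarith
    qed
    have dY: "int (card Y) \<le> dim A R Y"
      using dim_attained[OF finA assms(2), of R] cond by force
    have dA: "dim A R A = int (card Y)" using dimA RsubA cR cYA unfolding delta_def by simp
    have indep: "pg_indep A R Y"
      unfolding pg_indep_def cl_def
    proof (intro conjI ballI assms(2))
      fix y assume y: "y \<in> Y"
      have "dim A R (Y - {y}) \<le> delta R (Y - {y})" using assms(2) by (intro dim_le[OF finA]) auto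
      also have "\<dots> \<le> int (card (Y - {y}))" by (rule delta_le_card)
      also have "\<dots> = int (card Y) - 1" proof -
        have "card Y > 0" using y finY card_gt_0_iff by blast
        then show ?thesis using y finY by simp
      qed
      finally have "dim A R (Y - {y}) < dim A R Y" using dY by linarith
      moreover have "Y - {y} \<union> {y} = Y" using y by auto
      ultimately show "y \<notin> {ya \<in> A. dim A R (Y - {y} \<union> {ya}) = dim A R (Y - {y})}" by auto
    qed
    have "cl A R Y = A"
    proof -
      have "\<forall>a\<in>A. dim A R (Y \<union> {a}) = dim A R Y"
      proof
        fix a assume a: "a \<in> A"
        have "dim A R Y \<le> dim A R (Y \<union> {a})" using a assms(2) by (intro dim_mono[OF finA]) auto
        moreover have "dim A R (Y \<union> {a}) \<le> dim A R A" using a assms(2) by (intro dim_mono[OF finA]) auto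
        ultimately show "dim A R (Y \<union> {a}) = dim A R Y" using dA dY by linarith
      qed
      then show ?thesis unfolding cl_def by auto
    qed
    then show "pg_basis A R Y" using indep unfolding pg_basis_def by auto
  qed
qed

end
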